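(* Let $\mathrm L$ be a spline-admissible operator with pseudoinverse $\mathrm L^\dagger$ and let $K_{\mathrm L}=\{\bm k\in\mathbb Z^d:\widehat L[\bm k]\ne0\}$. (i) If $\sum_{\bm k\in K_{\mathrm L}}|\widehat L[\bm k]|^{-1}<\infty$, then $\mathrm L$ is sampling-admissible. (ii) If $\sum_{\bm k\in K_{\mathrm L}}|\widehat L[\bm k]|^{-2}=\infty$, then $\mathrm L$ is not sampling-admissible. In particular, if $\mathrm L$ has spectral growth $\gamma>d$ then it is sampling-admissible, and if it has spectral growth $\gamma\le d/2$ then it is not sampling-admissible.
   Context: $\mathbb T^d=\mathbb R^d/2\pi\mathbb Z^d$; $\mathcal S'(\mathbb T^d)$ the generalized periodic functions, with Fourier expansion $f=\sum\widehat f[\bm k]e_{\bm k}$, $e_{\bm k}(\bm x)=e^{\mathrm i\langle\bm x,\bm k\rangle}$. Linear shift-invariant continuous operators on $\mathcal S'(\mathbb T^d)$ act by $\mathrm Lf=\sum\widehat L[\bm k]\widehat f[\bm k]e_{\bm k}$ for slowly growing $\widehat L$; $\mathrm L^*$ has sequence $\overline{\widehat L}$. $\mathrm L$ is spline-admissible if its null space is finite-dimensional and it admits a pseudoinverse $\mathrm L^\dagger$ ($\mathrm L\mathrm L^\dagger\mathrm L=\mathrm L$, $\mathrm L^\dagger\mathrm L\mathrm L^\dagger=\mathrm L^\dagger$, $\mathrm L\mathrm L^\dagger$, $\mathrm L^\dagger\mathrm L$ self-adjoint); $\mathrm L^\dagger$ has Fourier sequence $1/\widehat L[\bm k]$ where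 $\widehat L[\bm k]\ne0$ and $0$ otherwise. $Ш$ is the Dirac comb. The measurement space is $\mathcal C_{\mathrm L}(\mathbb T^d)=\{g\in\mathcal S':(\mathrm L^\dagger)^*g$ continuous$\}$, and $\mathrm L$ is sampling-admissible if $Ш(\cdot-\bm x_0)\in\mathcal C_{\mathrm L}(\mathbb T^d)$ for all $\bm x_0\in\mathbb T^d$. $\mathrm L$ has spectral growth $\gamma\ge0$ if there exist $0<A\le B<\infty$, $k_0\ge0$ with $A\|\bm k\|^\gamma\le|\widehat L[\bm k]|\le B\|\bm k\|^\gamma$ for all $\|\bm k\|\ge k_0$. *)

theory Defs
  imports "HOL-Analysis.Analysis"
begin

text \<open>Frequencies k in Z^d are vectors of type int^'d; d = CARD('d).
  An LSI operator L on S'(T^d) is represented by its Fourier multiplier sequence Lhat.\<close>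

definition kvec :: "int ^ 'd \<Rightarrow> real ^ 'd" where
  "kvec k = (\<chi> i. real_of_int (k $ i))"

definition slowly_growing :: "(int ^ 'd \<Rightarrow> complex) \<Rightarrow> bool" where
  "slowly_growing a \<longleftrightarrow> (\<exists>C (N::nat). \<forall>k. norm (a k) \<le> C * (1 + norm (kvec k)) ^ N)"

definition pinv_seq :: "(int ^ 'd \<Rightarrow> complex) \<Rightarrow> int ^ 'd \<Rightarrow> complex" where
  "pinv_seq Lhat k = (if Lhat k = 0 then 0 else 1 / Lhat k)"

text \<open>L is continuous LSI on S' (slowly growing multiplier), has finite-dimensional
  null space (spanned by the e_k with Lhat k = 0), and admits a pseudoinverse, i.e. the
  operator with sequence pinv_seq is a continuous LSI operator on S'.\<close>
definition spline_admissible :: "(int ^ 'd \<Rightarrow> complex) \<Rightarrow> bool" where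
  "spline_admissible Lhat \<longleftrightarrow>
     slowly_growing Lhat \<and> finite {k. Lhat k = 0} \<and> slowly_growing (pinv_seq Lhat)"

definition periodic_fun :: "(real ^ 'd \<Rightarrow> complex) \<Rightarrow> bool" where
  "periodic_fun f \<longleftrightarrow> (\<forall>x n. f (x + (2 * pi) *\<^sub>R kvec n) = f x)"

definition fourier_coeff :: "(real ^ 'd \<Rightarrow> complex) \<Rightarrow> int ^ 'd \<Rightarrow> complex" where
  "fourier_coeff f k =
     integral (cbox 0 (\<chi> i. 2 * pi)) (\<lambda>x. f x * exp (- \<i> * complex_of_real (x \<bullet> kvec k)))
       / complex_of_real ((2 * pi) ^ CARD('d))"

text \<open>The generalized periodic function with Fourier coefficients c is a continuous function.\<close>
definition continuous_gen :: "(int ^ 'd \<Rightarrow> complex) \<Rightarrow> bool" where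
  "continuous_gen c \<longleftrightarrow>
     (\<exists>f. continuous_on UNIV f \<and> periodic_fun f \<and> (\<forall>k. fourier_coeff f k = c k))"

text \<open>Fourier coefficients of the shifted Dirac comb Sha(. - x0) (up to a normalizing constant).\<close>
definition shifted_comb :: "real ^ 'd \<Rightarrow> int ^ 'd \<Rightarrow> complex" where
  "shifted_comb x0 k = exp (- \<i> * complex_of_real (x0 \<bullet> kvec k))"

text \<open>(L^dagger)^* Sha(. - x0) is continuous for every x0.\<close>
definition sampling_admissible :: "(int ^ 'd \<Rightarrow> complex) \<Rightarrow> bool" where
  "sampling_admissible Lhat \<longleftrightarrow>
     (\<forall>x0. continuous_gen (\<lambda>k. cnj (pinv_seq Lhat k) * shifted_comb x0 k))"

definition spectral_growth :: "(int ^ 'd \<Rightarrow> complex) \<Rightarrow> real \<Rightarrow> bool" where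
  "spectral_growth Lhat \<gamma> \<longleftrightarrow> \<gamma> \<ge> 0 \<and>
     (\<exists>A B k0. 0 < A \<and> A \<le> B \<and> k0 \<ge> 0 \<and>
        (\<forall>k. norm (kvec k) \<ge> k0 \<longrightarrow>
           A * norm (kvec k) powr \<gamma> \<le> norm (Lhat k) \<and> norm (Lhat k) \<le> B * norm (kvec k) powr \<gamma>))"

end

theory Submission
  imports Defs
begin


lemma integral_lborel_prod:
  fixes f :: "'a::euclidean_space \<Rightarrow> real \<Rightarrow> complex"
  assumes int: "\<And>b. b \<in> Basis \<Longrightarrow> integrable lborel (f b)"
  shows "(\<integral>x. (\<Prod>b\<in>Basis. f b (x \<bullet> b)) \<partial>(lborel::'a measure)) = (\<Prod>b\<in>Basis. \<integral>x. f b x \<partial>lborel)"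
proof -
  interpret product_sigma_finite "\<lambda>_::'a. lborel::real measure" by standard
  have meas: "\<And>b. b \<in> Basis \<Longrightarrow> f b \<in> borel_measurable borel"
    using borel_measurable_integrable[OF int] by (simp add: measurable_lborel1)
  have "(\<integral>x. (\<Prod>b\<in>Basis. f b (x \<bullet> b)) \<partial>(lborel::'a measure))
      = (\<integral>y. (\<Prod>b\<in>Basis. f b ((\<Sum>b\<in>Basis. y b *\<^sub>R b) \<bullet> b)) \<partial>(\<Pi>\<^sub>M b\<in>Basis. lborel))"
    apply (subst lborel_eq)
    apply (rule integral_distr)
     apply simp
    apply (intro borel_measurable_prod)
    using meas by measurable
  also have "\<dots> = (\<integral>y. (\<Prod>b\<in>Basis. f b (y b)) \<partial>(\<Pi>\<^sub>M b\<in>Basis. lborel))"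
    apply (rule Bochner_Integration.integral_cong[OF refl])
    apply (rule prod.cong[OF refl])
    by (simp add: inner_sum_left inner_Basis if_distrib cong: if_cong)
  also have "\<dots> = (\<Prod>b\<in>Basis. \<integral>x. f b x \<partial>lborel)"
    by (rule product_integral_prod) (auto intro: int)
  finally show ?thesis .
qed



lemma one_dim_integral:
  fixes m :: int
  shows "((\<lambda>t. exp (\<i> * of_real t * of_int m)) has_integral (if m = 0 then of_real (2*pi) else 0)) {0..2*pi}"
proof (cases "m = 0")
  case True
  then show ?thesis using has_integral_const_real[of "1::complex" 0 "2*pi"] by (simp add: scaleR_conv_of_real)
next
  case False
  let ?F = "\<lambda>t::real. exp (\<i> * of_real t * of_int m) / (\<i> * of_int m)"
  have d: "(?F has_vector_derivative exp (\<i> * of_real t * of_int m)) (at t within {0..2*pi})" for t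
  proof -
    have "((\<lambda>z. exp (\<i> * z * of_int m) / (\<i> * of_int m)) has_field_derivative exp (\<i> * of_real t * of_int m)) (at (of_real t))"
      using False by (intro derivative_eq_intros refl) (auto simp: field_simps)
    then show ?thesis by (rule has_vector_derivative_real_field)
  qed
  have "exp (\<i> * of_real (2*pi) * of_int m) = 1"
    using exp_integer_2pi[of "of_int m"] by (simp add: mult_ac)
  then have "((\<lambda>t. exp (\<i> * of_real t * of_int m)) has_integral (?F (2*pi) - ?F 0)) {0..2*pi}"
    using d by (intro fundamental_theorem_of_calculus) auto
  then show ?thesis using False \<open>exp (\<i> * of_real (2*pi) * of_int m) = 1\<close> by simp
qed



lemma basis_cart_real: "(b::real^'d) \<in> Basis \<Longrightarrow> \<exists>i. b = axis i 1"
  by (auto simp: Basis_vec_def)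

lemma kvec_inner_axis: "kvec k \<bullet> axis i 1 = real_of_int (k $ i)"
  by (simp add: kvec_def inner_axis)

lemma orth:
  fixes k :: "int^'d"
  shows "integral (cbox 0 (\<chi> i. 2*pi)) (\<lambda>x::real^'d. exp (\<i> * of_real (x \<bullet> kvec k)))
     = (if k = 0 then of_real ((2*pi)^CARD('d)) else 0)"
proof -
  define v :: "real^'d" where "v = (\<chi> i. 2*pi)"
  define g where "g b t = indicator {0..2*pi} t *\<^sub>R exp (\<i> * of_real t * of_real (kvec k \<bullet> b))" for b :: "real^'d" and t :: real
  have gint: "integrable lborel (g b)" for b
    unfolding g_def by (intro borel_integrable_compact) (auto intro!: continuous_intros)
  have gval: "(\<integral>t. g b t \<partial>lborel) = (if kvec k \<bullet> b = 0 then of_real (2*pi) else 0)" if b: "b \<in> Basis" for b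
  proof -
    obtain i where i: "b = axis i 1" using basis_cart_real[OF b] by blast
    have "((\<lambda>t. if t \<in> {0..2*pi} then exp (\<i> * of_real t * of_int (k$i)) else 0) has_integral
           (if k$i = 0 then of_real (2*pi) else 0)) UNIV"
      using one_dim_integral[of "k$i"] by (subst has_integral_restrict_UNIV)
    moreover have "(\<lambda>t. if t \<in> {0..2*pi} then exp (\<i> * of_real t * of_int (k$i)) else 0) = g b"
      by (auto simp: g_def i kvec_inner_axis indicator_def fun_eq_iff)
    ultimately have "(g b has_integral (if k$i = 0 then of_real (2*pi) else 0)) UNIV" by simp
    then have "integral UNIV (g b) = (if k$i = 0 then of_real (2*pi) else 0)" by blast
    then show ?thesis using integral_lborel[OF gint[of b]] by (simp add: i kvec_inner_axis)
  qed
  have prodeq: "(\<Prod>b\<in>Basis. g b (x \<bullet> b)) = indicator (cbox 0 v) x *\<^sub>R exp (\<i> * of_real (x \<bullet> kvec k))" for x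
  proof (cases "x \<in> cbox 0 v")
    case True
    then have "\<forall>i. 0 \<le> x$i \<and> x$i \<le> 2*pi" by (simp add: mem_box_cart v_def)
    then have "\<forall>b\<in>Basis. x \<bullet> b \<in> {0..2*pi}"
      by (auto simp: inner_axis dest!: basis_cart_real)
    then have "(\<Prod>b\<in>Basis. g b (x \<bullet> b)) = (\<Prod>b\<in>Basis. exp (\<i> * of_real (x \<bullet> b) * of_real (kvec k \<bullet> b)))"
      by (auto simp: g_def intro!: prod.cong)
    also have "\<dots> = exp (\<Sum>b\<in>Basis. \<i> * of_real (x \<bullet> b) * of_real (kvec k \<bullet> b))"
      by (simp add: exp_sum)
    also have "(\<Sum>b\<in>Basis. \<i> * of_real (x \<bullet> b) * of_real (kvec k \<bullet> b)) = \<i> * of_real (x \<bullet> kvec k)"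
      by (simp add: euclidean_inner[of x "kvec k"] sum_distrib_left mult.assoc)
    finally show ?thesis using True by simp
  next
    case False
    then obtain i where "\<not> (0 \<le> x$i \<and> x$i \<le> 2*pi)" by (auto simp: mem_box_cart v_def)
    then obtain b where b: "b \<in> Basis" "x \<bullet> b \<notin> {0..2*pi}"
      by (intro that[of "axis i 1"]) (auto simp: inner_axis)
    then have "g b (x \<bullet> b) = 0" by (simp add: g_def)
    then have "(\<Prod>b\<in>Basis. g b (x \<bullet> b)) = 0" using b by (intro prod_zero) auto
    then show ?thesis using False by simp
  qed
  have indeq: "(\<lambda>x. indicator (cbox 0 v) x *\<^sub>R exp (\<i> * of_real (x \<bullet> kvec k))) = (\<lambda>x. if x \<in> cbox 0 v then exp (\<i> * of_real (x \<bullet> kvec k)) else 0)"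
    by (auto simp: indicator_def fun_eq_iff)
  have "integral (cbox 0 v) (\<lambda>x. exp (\<i> * of_real (x \<bullet> kvec k))) = integral UNIV (\<lambda>x. indicator (cbox 0 v) x *\<^sub>R exp (\<i> * of_real (x \<bullet> kvec k)))"
    by (simp only: indeq integral_restrict_UNIV)
  also have "\<dots> = (\<integral>x. indicator (cbox 0 v) x *\<^sub>R exp (\<i> * of_real (x \<bullet> kvec k)) \<partial>lborel)"
    by (intro integral_lborel borel_integrable_compact compact_cbox continuous_intros)
  also have "\<dots> = (\<integral>x. (\<Prod>b\<in>Basis. g b (x \<bullet> b)) \<partial>lborel)"
    by (simp add: prodeq)
  also have "\<dots> = (\<Prod>b\<in>Basis. \<integral>t. g b t \<partial>lborel)"
    by (rule integral_lborel_prod) (rule gint)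
  also have "\<dots> = (\<Prod>b\<in>(Basis::(real^'d) set). (if kvec k \<bullet> b = 0 then of_real (2*pi) else 0))"
    by (rule prod.cong) (auto simp: gval)
  also have "\<dots> = (if k = 0 then of_real ((2*pi)^CARD('d)) else 0)"
  proof (cases "k = 0")
    case True
    then have "kvec k = 0" by (simp add: kvec_def vec_eq_iff)
    then show ?thesis using True by (simp add: power_mult_distrib)
  next
    case False
    then obtain i where "k$i \<noteq> 0" by (auto simp: vec_eq_iff)
    then have "axis i 1 \<in> (Basis::(real^'d) set)" "kvec k \<bullet> axis i 1 \<noteq> 0"
      by (auto simp: kvec_inner_axis)
    then have "\<exists>b\<in>(Basis::(real^'d) set). (if kvec k \<bullet> b = 0 then of_real (2*pi) else (0::complex)) = 0"
      by auto
    then have "(\<Prod>b\<in>(Basis::(real^'d) set). (if kvec k \<bullet> b = 0 then of_real (2*pi) else (0::complex))) = 0"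
      by (rule prod_zero[OF finite_Basis])
    then show ?thesis using False by simp
  qed
  finally show ?thesis by (simp add: v_def)
qed



lemma surj_vec_nth: "surj (vec_nth :: 'a^'d \<Rightarrow> 'd \<Rightarrow> 'a)"
proof -
  have "g = vec_nth (vec_lambda g)" for g :: "'d \<Rightarrow> 'a" by (simp add: fun_eq_iff)
  then show ?thesis by blast
qed

lemma inj_vec_nth: "inj (vec_nth :: 'a^'d \<Rightarrow> 'd \<Rightarrow> 'a)"
  by (simp add: inj_def vec_eq_iff fun_eq_iff)

lemma finite_box_int: "finite {k::int^'d. \<forall>i. \<bar>k$i\<bar> \<le> M}"
proof -
  have "vec_nth ` {k::int^'d. \<forall>i. \<bar>k$i\<bar> \<le> M} \<subseteq> PiE UNIV (\<lambda>_. {-M..M})"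
    by (auto simp: PiE_UNIV_domain abs_le_iff) (metis add.inverse_inverse neg_le_iff_le)
  then have "finite (vec_nth ` {k::int^'d. \<forall>i. \<bar>k$i\<bar> \<le> M})"
    by (rule finite_subset) (intro finite_PiE; simp)
  then show ?thesis using inj_vec_nth by (metis finite_imageD inj_on_subset subset_UNIV)
qed

lemma card_Q:
  assumes "0 \<le> n"
  shows "card {k::int^'d. \<forall>i. 1 \<le> k$i \<and> k$i \<le> n} = nat n ^ CARD('d)"
proof -
  let ?Q = "{k::int^'d. \<forall>i. 1 \<le> k$i \<and> k$i \<le> n}"
  have "vec_nth ` ?Q = PiE UNIV (\<lambda>_. {1..n})"
  proof
    show "vec_nth ` ?Q \<subseteq> PiE UNIV (\<lambda>_. {1..n})" by (auto simp: PiE_UNIV_domain)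
    show "PiE UNIV (\<lambda>_. {1..n}) \<subseteq> vec_nth ` ?Q"
    proof
      fix g assume "g \<in> PiE UNIV (\<lambda>_::'d. {1..n})"
      then have "vec_lambda g \<in> ?Q" "g = vec_nth (vec_lambda g)" by (auto simp: PiE_UNIV_domain fun_eq_iff)
      then show "g \<in> vec_nth ` ?Q" by blast
    qed
  qed
  then have "card (vec_nth ` ?Q) = nat n ^ CARD('d)"
    by (simp add: card_PiE)
  moreover have "card (vec_nth ` ?Q) = card ?Q"
    by (rule card_image) (meson inj_vec_nth inj_on_subset subset_UNIV)
  ultimately show ?thesis by simp
qed

lemma norm_kvec_component: "\<bar>real_of_int (k$i)\<bar> \<le> norm (kvec k)"
  using component_le_norm_cart[of "kvec k" i] by (simp add: kvec_def)

lemma norm_kvec_ge1: "k \<noteq> 0 \<Longrightarrow> 1 \<le> norm (kvec k)"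
proof -
  assume "k \<noteq> 0"
  then obtain i where "k$i \<noteq> 0" by (auto simp: vec_eq_iff)
  then have "1 \<le> \<bar>real_of_int (k$i)\<bar>" by linarith
  then show ?thesis using norm_kvec_component[of k i] by linarith
qed

lemma kvec_zero_iff: "kvec k = 0 \<longleftrightarrow> k = 0"
  by (simp add: kvec_def vec_eq_iff)

lemma one_dim_summable:
  assumes p: "p > 1"
  shows "(\<lambda>n::int. (1 + \<bar>real_of_int n\<bar>) powr -p) summable_on UNIV"
proof -
  have "summable (\<lambda>n::nat. real n powr -p)" using p by (simp add: summable_real_powr_iff)
  then have "summable (\<lambda>n::nat. real (Suc n) powr -p)" by (subst summable_Suc_iff)
  then have s: "(\<lambda>n::nat. (1 + real n) powr -p) summable_on UNIV"
    by (subst summable_on_UNIV_nonneg_real_iff) (auto simp: add.commute)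
  let ?h = "\<lambda>n::int. (1 + \<bar>real_of_int n\<bar>) powr -p"
  have "?h summable_on range int"
    by (subst summable_on_reindex) (auto simp: o_def s)
  moreover have "?h summable_on range (\<lambda>n::nat. - int n)"
    by (subst summable_on_reindex) (auto simp: o_def s inj_on_def)
  moreover have "range int \<union> range (\<lambda>n::nat. - int n) = UNIV"
  proof -
    have "x \<in> range int \<union> range (\<lambda>n::nat. - int n)" for x :: int
    proof (cases "x \<ge> 0")
      case True then have "x = int (nat x)" by simp
      then show ?thesis by blast
    next
      case False then have "x = - int (nat (-x))" by simp
      then show ?thesis by blast
    qed
    then show ?thesis by blast
  qed
  ultimately show ?thesis by (metis summable_on_union)
qed

lemma prod_summable:
  assumes p: "p > 1"
  shows "(\<lambda>k::int^'d. \<Prod>i\<in>UNIV. (1 + \<bar>real_of_int (k$i)\<bar>) powr -p) summable_on UNIV"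
proof -
  let ?h = "\<lambda>(i::'d) (n::int). (1 + \<bar>real_of_int n\<bar>) powr -p"
  have "Infinite_Set_Sum.abs_summable_on (?h i) UNIV" for i
    using one_dim_summable[OF p] by (subst abs_summable_equivalent[symmetric]) simp
  then have "Infinite_Set_Sum.abs_summable_on (\<lambda>g. \<Prod>i\<in>UNIV. ?h i (g i)) (PiE UNIV (\<lambda>_. UNIV))"
    by (intro abs_summable_on_prod_PiE) auto
  then have "(\<lambda>g. norm (\<Prod>i\<in>UNIV. ?h i (g i))) summable_on UNIV"
    by (subst (asm) abs_summable_equivalent[symmetric]) simp
  then have "(\<lambda>g. \<Prod>i\<in>UNIV. ?h i (g i)) summable_on range vec_nth"
    by (simp add: surj_vec_nth prod_nonneg)
  then show ?thesis
    by (subst (asm) summable_on_reindex) (auto simp: o_def inj_vec_nth)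
qed



lemma lattice_conv:
  assumes s: "s > real CARD('d)"
  shows "(\<lambda>k::int^'d. norm (kvec k) powr -s) summable_on UNIV"
proof -
  define d where "d = real CARD('d)"
  have d0: "d > 0" by (simp add: d_def)
  define p where "p = s / d"
  have p: "p > 1" using s d0 by (simp add: p_def d_def)
  have bound: "norm (kvec k) powr -s \<le> 2 powr s * (\<Prod>i\<in>UNIV. (1 + \<bar>real_of_int (k$i)\<bar>) powr -p)" for k :: "int^'d"
  proof (cases "k = 0")
    case True
    then show ?thesis by (simp add: kvec_zero_iff[symmetric] prod_nonneg)
  next
    case False
    define r where "r = norm (kvec k)"
    have r1: "1 \<le> r" using norm_kvec_ge1[OF False] by (simp add: r_def)
    define P where "P = (\<Prod>i\<in>UNIV. (1 + \<bar>real_of_int (k$i)\<bar>))"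
    have P0: "P > 0" unfolding P_def by (intro prod_pos) auto
    have "P \<le> (\<Prod>i\<in>(UNIV::'d set). 1 + r)"
      unfolding P_def using norm_kvec_component[of k] by (intro prod_mono) (auto simp: r_def)
    also have "\<dots> = (1 + r) ^ CARD('d)" by simp
    also have "\<dots> \<le> (2 * r) ^ CARD('d)" using r1 by (intro power_mono) auto
    finally have Ple: "P \<le> (2*r) ^ CARD('d)" .
    have "(\<Prod>i\<in>UNIV. (1 + \<bar>real_of_int (k$i)\<bar>) powr -p) = P powr -p"
      by (simp add: P_def prod_powr_distrib)
    also have "\<dots> \<ge> ((2*r) ^ CARD('d)) powr -p"
      using p P0 Ple by (intro powr_mono2') auto
    finally have ge: "((2*r) ^ CARD('d)) powr -p \<le> (\<Prod>i\<in>UNIV. (1 + \<bar>real_of_int (k$i)\<bar>) powr -p)" .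
    have "((2*r) ^ CARD('d)) powr -p = ((2*r) powr d) powr -p"
      using r1 by (simp add: powr_realpow d_def)
    also have "\<dots> = (2*r) powr -s" using d0 by (simp add: powr_powr p_def)
    also have "\<dots> = 2 powr -s * r powr -s" using r1 by (simp add: powr_mult)
    finally have "r powr -s = 2 powr s * ((2*r) ^ CARD('d)) powr -p"
      by (simp add: powr_minus field_simps)
    then show ?thesis using ge by (simp add: r_def)
  qed
  have "(\<lambda>k::int^'d. 2 powr s * (\<Prod>i\<in>UNIV. (1 + \<bar>real_of_int (k$i)\<bar>) powr -p)) summable_on UNIV"
    using prod_summable[OF p] by (rule summable_on_cmult_right)
  then show ?thesis
    by (rule summable_on_comparison_test) (use bound in auto)
qed

definition Qb :: "int \<Rightarrow> (int^'d) set" where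
  "Qb n = {k. \<forall>i. 1 \<le> k$i \<and> k$i \<le> n}"

lemma finite_Qb: "finite (Qb n)"
  by (rule finite_subset[OF _ finite_box_int[of "\<bar>n\<bar>"]]) (auto simp: Qb_def, metis abs_of_pos order.trans abs_ge_self zero_less_one order_less_le_trans)

lemma shell:
  fixes n :: int
  assumes n: "1 \<le> n"
  shows "(\<Sum>k\<in>(Qb n :: (int^'d) set). norm (kvec k) powr -real CARD('d)) + (2^CARD('d) - 1) / (real CARD('d) * 2) ^ CARD('d)
       \<le> (\<Sum>k\<in>(Qb (2*n) :: (int^'d) set). norm (kvec k) powr -real CARD('d))"
proof -
  define d where "d = CARD('d)"
  let ?g = "\<lambda>k::int^'d. norm (kvec k) powr -real d"
  define c where "c = 1 / (real d * (2 * real_of_int n)) ^ d"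
  have sub: "Qb n \<subseteq> (Qb (2*n) :: (int^'d) set)" using n by (auto simp: Qb_def, smt (verit))
  have lb: "c \<le> ?g k" if k: "k \<in> Qb (2*n)" for k :: "int^'d"
  proof -
    have "k \<noteq> 0" using k by (auto simp: Qb_def vec_eq_iff) (metis not_one_le_zero)
    then have pos: "0 < norm (kvec k)" using norm_kvec_ge1 by fastforce
    have "norm (kvec k) \<le> (\<Sum>i\<in>UNIV. \<bar>kvec k $ i\<bar>)" by (rule norm_le_l1_cart)
    also have "\<dots> \<le> (\<Sum>i\<in>(UNIV::'d set). 2 * real_of_int n)"
    proof (intro sum_mono)
      fix i
      from k have "1 \<le> k$i" "k$i \<le> 2*n" by (auto simp: Qb_def)
      then have "1 \<le> real_of_int (k$i)" "real_of_int (k$i) \<le> 2 * real_of_int n" by linarith+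
      then show "\<bar>kvec k $ i\<bar> \<le> 2 * real_of_int n" by (simp add: kvec_def)
    qed
    also have "\<dots> = real d * (2 * real_of_int n)" by (simp add: d_def)
    finally have le: "norm (kvec k) \<le> real d * (2 * real_of_int n)" .
    have "(real d * (2 * real_of_int n)) powr -real d \<le> ?g k"
      using pos le by (intro powr_mono2') auto
    moreover have "(real d * (2 * real_of_int n)) powr -real d = c"
      using n by (simp add: c_def powr_minus powr_realpow d_def inverse_eq_divide)
    ultimately show ?thesis by simp
  qed
  have cardd: "real (card (Qb (2*n) - Qb n :: (int^'d) set)) = (2 * real_of_int n) ^ d - real_of_int n ^ d"
  proof -
    have "card (Qb (2*n) - Qb n :: (int^'d) set) = card (Qb (2*n) :: (int^'d) set) - card (Qb n :: (int^'d) set)"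
      by (rule card_Diff_subset[OF finite_Qb sub])
    moreover have "card (Qb n :: (int^'d) set) \<le> card (Qb (2*n) :: (int^'d) set)"
      by (rule card_mono[OF finite_Qb sub])
    ultimately show ?thesis using n
      by (simp add: Qb_def card_Q d_def of_nat_diff)
  qed
  have "real (card (Qb (2*n) - Qb n :: (int^'d) set)) * c \<le> sum ?g (Qb (2*n) - Qb n)"
    by (rule sum_bounded_below) (use lb in auto)
  also have "\<dots> = sum ?g (Qb (2*n)) - sum ?g (Qb n)"
    by (rule sum_diff[OF finite_Qb sub])
  finally have A: "real (card (Qb (2*n) - Qb n :: (int^'d) set)) * c \<le> sum ?g (Qb (2*n)) - sum ?g (Qb n)" .
  have "real (card (Qb (2*n) - Qb n :: (int^'d) set)) * c = (2^d - 1) / (real d * 2) ^ d"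
  proof -
    have np: "(real_of_int n)^d > 0" using n by simp
    have dp: "(real d)^d > 0" by (simp add: d_def)
    have "(a * b - a) / (a * c) = (b - 1) / c" if "a > 0" for a b c :: real
      using that by (cases "c = 0") (simp_all add: field_simps)
    from this[OF np, of "2^d" "(real d)^d * 2^d"] show ?thesis unfolding cardd c_def by (simp add: power_mult_distrib mult_ac)
  qed
  then show ?thesis using A by (simp add: d_def)
qed

lemma finite_norm_less: "finite {k::int^'d. norm (kvec k) < R}"
proof (rule finite_subset[OF _ finite_box_int[of "\<lceil>R\<rceil>"]])
  show "{k::int^'d. norm (kvec k) < R} \<subseteq> {k. \<forall>i. \<bar>k $ i\<bar> \<le> \<lceil>R\<rceil>}"
  proof safe
    fix k :: "int^'d" and i assume "norm (kvec k) < R"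
    then have "real_of_int \<bar>k$i\<bar> < R" using norm_kvec_component[of k i] by simp
    then show "\<bar>k $ i\<bar> \<le> \<lceil>R\<rceil>" by (simp add: le_ceiling_iff)
  qed
qed

lemma lattice_div:
  "\<not> (\<lambda>k::int^'d. norm (kvec k) powr -real CARD('d)) summable_on {k. R \<le> norm (kvec k)}"
proof
  define g where "g = (\<lambda>k::int^'d. norm (kvec k) powr -real CARD('d))"
  define \<delta> :: real where "\<delta> = (2^CARD('d) - 1) / (real CARD('d) * 2) ^ CARD('d)"
  have \<delta>: "\<delta> > 0" unfolding \<delta>_def by (intro divide_pos_pos) (auto simp: one_less_power)
  assume "(\<lambda>k::int^'d. norm (kvec k) powr -real CARD('d)) summable_on {k. R \<le> norm (kvec k)}"
  then have "g summable_on ({k. R \<le> norm (kvec k)} \<union> {k. norm (kvec k) < R})"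
    unfolding g_def by (intro summable_on_union[OF _ summable_on_finite[OF finite_norm_less]])
  moreover have "{k::int^'d. R \<le> norm (kvec k)} \<union> {k. norm (kvec k) < R} = UNIV" by auto
  ultimately have gs: "g summable_on UNIV" by simp
  define M where "M = infsum g UNIV"
  have bnd: "sum g F \<le> M" if "finite F" for F
  proof -
    have "infsum g F \<le> infsum g UNIV"
      by (rule infsum_mono_neutral[OF summable_on_finite[OF that] gs]) (auto simp: g_def)
    then show ?thesis using that by (simp add: M_def)
  qed
  have ind: "real j * \<delta> \<le> sum g (Qb (2^j))" for j
  proof (induction j)
    case 0
    show ?case by (simp add: g_def sum_nonneg)
  next
    case (Suc j)
    have "sum g (Qb (2^j)) + \<delta> \<le> sum g (Qb (2 * 2^j))"
      using shell[of "2^j", where 'd='d] by (simp add: g_def \<delta>_def)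
    then show ?case using Suc.IH by (simp add: algebra_simps)
  qed
  obtain j :: nat where "M / \<delta> < real j" using reals_Archimedean2 by blast
  then have "M < real j * \<delta>" using \<delta> by (simp add: field_simps)
  moreover have "real j * \<delta> \<le> M" using ind[of j] bnd[OF finite_Qb[of "2^j"]] by linarith
  ultimately show False by linarith
qed



definition ee :: "int^'d \<Rightarrow> real^'d \<Rightarrow> complex" where
  "ee k x = exp (\<i> * of_real (x \<bullet> kvec k))"

definition Bx :: "(real^'d) set" where "Bx = cbox 0 (\<chi> i. 2*pi)"

lemma norm_ee [simp]: "norm (ee k x) = 1"
  by (simp add: ee_def)

lemma cont_ee [continuous_intros]: "continuous_on A (ee k)"
  unfolding ee_def by (intro continuous_intros)

lemma kvec_diff: "kvec (k - j) = kvec k - kvec j"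
  by (simp add: kvec_def vec_eq_iff)

lemma ee_mult_cnj: "ee k x * cnj (ee j x) = ee (k - j) x"
proof -
  have "ee k x * cnj (ee j x) = exp (\<i> * of_real (x \<bullet> kvec k)) * exp (- (\<i> * of_real (x \<bullet> kvec j)))"
    by (simp add: ee_def exp_cnj)
  also have "\<dots> = exp (\<i> * of_real (x \<bullet> kvec k) + - (\<i> * of_real (x \<bullet> kvec j)))"
    by (simp only: exp_add)
  also have "\<dots> = ee (k - j) x"
    by (simp add: ee_def kvec_diff inner_diff_right algebra_simps)
  finally show ?thesis .
qed

lemma cnj_ee: "cnj (ee k x) = exp (- \<i> * complex_of_real (x \<bullet> kvec k))"
  by (simp add: ee_def exp_cnj)

lemma orth2:
  "((\<lambda>x. ee k x * cnj (ee j x)) has_integral (if k = j then of_real ((2*pi)^CARD('d)) else 0)) (Bx :: (real^'d) set)"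
proof -
  have int: "(\<lambda>x. ee k x * cnj (ee j x)) integrable_on (Bx :: (real^'d) set)"
    unfolding Bx_def by (intro integrable_continuous continuous_intros)
  have eq: "(\<lambda>x::real^'d. ee k x * cnj (ee j x)) = (\<lambda>x. exp (\<i> * of_real (x \<bullet> kvec (k - j))))"
    by (rule ext, subst ee_mult_cnj, unfold ee_def, rule refl)
  have kj: "(k - j = 0) = (k = j)" by simp
  have "integral (Bx :: (real^'d) set) (\<lambda>x. ee k x * cnj (ee j x)) = (if k = j then of_real ((2*pi)^CARD('d)) else 0)"
    unfolding eq Bx_def kj[symmetric] by (rule orth)
  with integrable_integral[OF int] show ?thesis by simp
qed

lemma ee_periodic: "ee k (x + (2 * pi) *\<^sub>R kvec n) = ee k x"
proof -
  have "kvec n \<bullet> kvec k = real_of_int (\<Sum>i\<in>UNIV. n$i * k$i)"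
    by (simp add: kvec_def inner_vec_def)
  then obtain m :: int where m: "kvec n \<bullet> kvec k = real_of_int m" by blast
  have inner: "(x + (2*pi) *\<^sub>R kvec n) \<bullet> kvec k = x \<bullet> kvec k + 2*pi*real_of_int m"
    by (simp add: inner_add_left m)
  have "\<i> * complex_of_real ((x + (2*pi) *\<^sub>R kvec n) \<bullet> kvec k) = \<i> * of_real (x \<bullet> kvec k) + 2 * of_real pi * \<i> * of_int m"
    unfolding inner by (simp add: distrib_left mult_ac)
  then have "ee k (x + (2 * pi) *\<^sub>R kvec n) = ee k x * exp (2 * of_real pi * \<i> * of_int m)"
    unfolding ee_def by (simp only: exp_add)
  also have "exp (2 * of_real pi * \<i> * of_int m) = 1"
    using exp_integer_2pi[of "of_int m"] by (simp add: mult_ac)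
  finally show ?thesis by simp
qed



lemma tail_small:
  fixes c :: "'a \<Rightarrow> complex"
  assumes cs: "(\<lambda>k. norm (c k)) summable_on UNIV" and e: "e > 0"
  shows "\<forall>\<^sub>F F in finite_subsets_at_top UNIV. finite F \<and> infsum (\<lambda>k. norm (c k)) (UNIV - F) < e"
proof -
  let ?n = "\<lambda>k. norm (c k)"
  have "(sum ?n \<longlongrightarrow> infsum ?n UNIV) (finite_subsets_at_top UNIV)"
    using cs by (simp add: has_sum_def[symmetric] has_sum_infsum)
  then have ev: "\<forall>\<^sub>F F in finite_subsets_at_top UNIV. dist (sum ?n F) (infsum ?n UNIV) < e"
    using e by (rule tendstoD)
  have fin: "\<forall>\<^sub>F F in finite_subsets_at_top UNIV. finite F"
    by (auto simp: eventually_finite_subsets_at_top)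
  show ?thesis
  proof (rule eventually_mono[OF eventually_conj[OF ev fin]])
    fix F assume F: "dist (sum ?n F) (infsum ?n UNIV) < e \<and> finite F"
    then have "infsum ?n (UNIV - F) = infsum ?n UNIV - sum ?n F"
      using cs by (subst infsum_Diff) auto
    then show "finite F \<and> infsum ?n (UNIV - F) < e" using F by (simp add: dist_real_def abs_less_iff)
  qed
qed

lemma fourier_construct:
  fixes c :: "int^'d \<Rightarrow> complex"
  assumes cs: "(\<lambda>k. norm (c k)) summable_on UNIV"
  shows "continuous_gen c"
proof -
  define f where "f x = infsum (\<lambda>k. c k * ee k x) UNIV" for x
  define S where "S F x = (\<Sum>k\<in>F. c k * ee k x)" for F x
  have nsum: "(\<lambda>k. norm (c k * ee k x)) summable_on A" for x A
    using summable_on_subset_banach[OF cs, of A] by (simp add: norm_mult)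
  have sumx: "(\<lambda>k. c k * ee k x) summable_on A" for x A
    by (rule abs_summable_summable[OF nsum])
  have unif: "uniform_limit UNIV (\<lambda>F x. S F x * w x) (\<lambda>x. f x * w x) (finite_subsets_at_top UNIV)"
    if w: "\<And>x. norm (w x) \<le> 1" for w :: "real^'d \<Rightarrow> complex"
  proof (rule uniform_limitI)
    fix e :: real assume e: "e > 0"
    show "\<forall>\<^sub>F F in finite_subsets_at_top UNIV. \<forall>x\<in>UNIV. dist (S F x * w x) (f x * w x) < e"
    proof (rule eventually_mono[OF tail_small[OF cs e]], safe)
      fix F x assume F: "finite F" "infsum (\<lambda>k. norm (c k)) (UNIV - F) < e"
      have "f x - S F x = infsum (\<lambda>k. c k * ee k x) (UNIV - F)"
        unfolding f_def S_def using F by (subst infsum_Diff) (auto intro: sumx)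
      then have "norm (f x - S F x) \<le> infsum (\<lambda>k. norm (c k * ee k x)) (UNIV - F)"
        by (simp add: norm_infsum_bound nsum)
      also have "\<dots> = infsum (\<lambda>k. norm (c k)) (UNIV - F)" by (simp add: norm_mult)
      finally have "norm (f x - S F x) < e" using F by linarith
      moreover have "dist (S F x * w x) (f x * w x) = norm (f x - S F x) * norm (w x)"
        by (simp add: dist_norm norm_mult left_diff_distrib[symmetric] norm_minus_commute)
      moreover have "norm (f x - S F x) * norm (w x) \<le> norm (f x - S F x)"
        using w[of x] by (simp add: mult_left_le)
      ultimately show "dist (S F x * w x) (f x * w x) < e" by linarith
    qed
  qed
  have contS: "continuous_on A (\<lambda>x. S F x * w x)" if "continuous_on A w" for A F w
    unfolding S_def by (intro continuous_intros that)
  have cont: "continuous_on UNIV f"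
  proof -
    have "continuous_on UNIV (\<lambda>x. f x * 1)"
    proof (rule uniform_limit_theorem[OF _ unif])
      show "\<forall>\<^sub>F F in finite_subsets_at_top UNIV. continuous_on UNIV (\<lambda>x. S F x * 1)"
        by (rule always_eventually, rule allI, rule contS, rule continuous_on_const)
    qed auto
    then show ?thesis by simp
  qed
  have per: "periodic_fun f"
    unfolding periodic_fun_def f_def by (simp add: ee_periodic)
  have coeff: "fourier_coeff f m = c m" for m
  proof -
    define N :: complex where "N = of_real ((2*pi)^CARD('d))"
    have N0: "N \<noteq> 0" by (simp add: N_def)
    have ul: "uniform_limit Bx (\<lambda>F x. S F x * cnj (ee m x)) (\<lambda>x. f x * cnj (ee m x)) (finite_subsets_at_top UNIV)"
      using unif[of "\<lambda>x. cnj (ee m x)"] by (auto intro: uniform_limit_on_subset)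
    obtain I J where I: "\<And>F. ((\<lambda>x. S F x * cnj (ee m x)) has_integral I F) Bx"
      and J: "((\<lambda>x. f x * cnj (ee m x)) has_integral J) Bx"
      and IJ: "(I \<longlongrightarrow> J) (finite_subsets_at_top UNIV)"
    proof -
      have c1: "\<And>F. continuous_on (cbox 0 (\<chi> i. 2*pi)) (\<lambda>x. S F x * cnj (ee m x))"
        by (intro contS continuous_on_cnj cont_ee)
      show ?thesis
        using uniform_limit_integral_cbox[OF ul[unfolded Bx_def] c1 finite_subsets_at_top_neq_bot] that
        unfolding Bx_def by blast
    qed
    have IF: "I F = (if m \<in> F then c m * N else 0)" if "finite F" for F
    proof -
      have hk: "((\<lambda>x. c k * (ee k x * cnj (ee m x))) has_integral (c k * (if k = m then N else 0))) Bx" for k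
        by (rule has_integral_mult_right) (unfold N_def, rule orth2)
      have feq: "(\<lambda>x. S F x * cnj (ee m x)) = (\<lambda>x. \<Sum>k\<in>F. c k * (ee k x * cnj (ee m x)))"
        by (simp add: S_def sum_distrib_right mult.assoc)
      have "((\<lambda>x. S F x * cnj (ee m x)) has_integral (\<Sum>k\<in>F. c k * (if k = m then N else 0))) Bx"
        unfolding feq by (rule has_integral_sum[OF that hk])
      then have "I F = (\<Sum>k\<in>F. c k * (if k = m then N else 0))" using I has_integral_unique by blast
      also have "\<dots> = (if m \<in> F then c m * N else 0)"
        using that by (simp add: if_distrib sum.delta' cong: if_cong)
      finally show ?thesis .
    qed
    have "\<forall>\<^sub>F F in finite_subsets_at_top UNIV. I F = c m * N"
      unfolding eventually_finite_subsets_at_top by (intro exI[of _ "{m}"]) (auto simp: IF)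
    then have "(I \<longlongrightarrow> c m * N) (finite_subsets_at_top UNIV)"
      by (rule tendsto_eventually)
    then have "J = c m * N" using IJ tendsto_unique finite_subsets_at_top_neq_bot by blast
    then have "integral Bx (\<lambda>x. f x * cnj (ee m x)) = c m * N" using J by blast
    then show ?thesis
      unfolding fourier_coeff_def using N0 by (simp add: Bx_def cnj_ee N_def)
  qed
  show ?thesis unfolding continuous_gen_def using cont per coeff by blast
qed



lemma bessel:
  fixes c :: "int^'d \<Rightarrow> complex"
  assumes "continuous_gen c"
  shows "(\<lambda>k. (norm (c k))^2) summable_on UNIV"
proof -
  obtain f where fc: "continuous_on UNIV f" and coef: "\<And>k. fourier_coeff f k = c k"
    using assms unfolding continuous_gen_def by blast
  define N :: complex where "N = of_real ((2*pi)^CARD('d))"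
  have N0: "N \<noteq> 0" by (simp add: N_def)
  have contB: "continuous_on Bx g" if "continuous_on UNIV g" for g :: "real^'d \<Rightarrow> complex"
    using that continuous_on_subset by blast
  have intB: "g integrable_on Bx" if "continuous_on UNIV g" for g :: "real^'d \<Rightarrow> complex"
    unfolding Bx_def by (rule integrable_continuous) (rule contB[OF that, unfolded Bx_def])
  have hf: "((\<lambda>x. f x * cnj (ee k x)) has_integral (N * c k)) Bx" for k
  proof -
    have i: "(\<lambda>x. f x * cnj (ee k x)) integrable_on Bx"
      by (intro intB continuous_intros fc)
    have "integral Bx (\<lambda>x. f x * cnj (ee k x)) = N * c k"
      using coef[of k] N0 unfolding fourier_coeff_def by (simp add: Bx_def cnj_ee N_def field_simps)
    then show ?thesis using integrable_integral[OF i] by simp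
  qed
  obtain A0 where A0: "((\<lambda>x. f x * cnj (f x)) has_integral A0) Bx"
  proof -
    have "continuous_on UNIV (\<lambda>x. f x * cnj (f x))" by (intro continuous_intros fc)
    then show ?thesis using intB that by blast
  qed
  have bnd: "(\<Sum>k\<in>F. (norm (c k))^2) \<le> Re A0 / (2*pi)^CARD('d)" if F: "finite F" for F
  proof -
    define S where "S x = (\<Sum>k\<in>F. c k * ee k x)" for x
    define T where "T = (\<Sum>k\<in>F. (norm (c k))^2)"
    have cc: "z * cnj z = (complex_of_real (norm z))^2" "cnj z * z = (complex_of_real (norm z))^2" for z :: complex
      by (metis complex_norm_square of_real_power mult.commute)+
    have I1: "((\<lambda>x. f x * cnj (S x)) has_integral (N * of_real T)) Bx"
    proof -
      have eq: "(\<lambda>x. f x * cnj (S x)) = (\<lambda>x. \<Sum>k\<in>F. cnj (c k) * (f x * cnj (ee k x)))"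
        by (simp add: S_def cnj_sum sum_distrib_left mult_ac)
      have "((\<lambda>x. \<Sum>k\<in>F. cnj (c k) * (f x * cnj (ee k x))) has_integral (\<Sum>k\<in>F. cnj (c k) * (N * c k))) Bx"
        by (intro has_integral_sum F has_integral_mult_right hf)
      moreover have "(\<Sum>k\<in>F. cnj (c k) * (N * c k)) = N * of_real T"
        by (simp add: T_def sum_distrib_left mult_ac cc)
      ultimately show ?thesis unfolding eq by simp
    qed
    have I2: "((\<lambda>x. S x * cnj (f x)) has_integral (N * of_real T)) Bx"
    proof -
      have "(cnj \<circ> (\<lambda>x. f x * cnj (S x)) has_integral cnj (N * of_real T)) Bx"
        using I1 by (simp only: has_integral_cnj)
      moreover have "cnj \<circ> (\<lambda>x. f x * cnj (S x)) = (\<lambda>x. S x * cnj (f x))"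
        by (simp add: o_def mult.commute)
      moreover have "cnj N = N" by (simp add: N_def)
      ultimately show ?thesis by simp
    qed
    have I3: "((\<lambda>x. S x * cnj (S x)) has_integral (N * of_real T)) Bx"
    proof -
      have eq: "(\<lambda>x. S x * cnj (S x)) = (\<lambda>x. \<Sum>k\<in>F. \<Sum>j\<in>F. c k * cnj (c j) * (ee k x * cnj (ee j x)))"
        by (simp add: S_def cnj_sum sum_product mult_ac)
      have "((\<lambda>x. \<Sum>k\<in>F. \<Sum>j\<in>F. c k * cnj (c j) * (ee k x * cnj (ee j x))) has_integral
              (\<Sum>k\<in>F. \<Sum>j\<in>F. c k * cnj (c j) * (if k = j then N else 0))) Bx"
        unfolding N_def by (intro has_integral_sum F has_integral_mult_right orth2)
      moreover have "(\<Sum>k\<in>F. \<Sum>j\<in>F. c k * cnj (c j) * (if k = j then N else 0)) = N * of_real T"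
        using F by (simp add: if_distrib sum.delta cong: if_cong)
          (simp add: T_def sum_distrib_left mult_ac cc)
      ultimately show ?thesis unfolding eq by simp
    qed
    have G: "((\<lambda>x. f x * cnj (f x) - f x * cnj (S x) - S x * cnj (f x) + S x * cnj (S x)) has_integral
              (A0 - N * of_real T - N * of_real T + N * of_real T)) Bx"
      by (intro has_integral_add has_integral_diff A0 I1 I2 I3)
    have Geq: "(\<lambda>x. f x * cnj (f x) - f x * cnj (S x) - S x * cnj (f x) + S x * cnj (S x))
             = (\<lambda>x. of_real ((norm (f x - S x))^2))"
    proof (rule ext)
      fix x
      have "(complex_of_real (norm (f x - S x)))^2 = (f x - S x) * cnj (f x - S x)" by (rule cc(1)[symmetric])
      then show "f x * cnj (f x) - f x * cnj (S x) - S x * cnj (f x) + S x * cnj (S x) = of_real ((norm (f x - S x))^2)"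
        by (simp add: algebra_simps)
    qed
    have R: "((\<lambda>x. (norm (f x - S x))^2) has_integral Re (A0 - N * of_real T)) Bx"
    proof -
      have "A0 - N * of_real T - N * of_real T + N * of_real T = A0 - N * of_real T" by simp
      with G have G': "((\<lambda>x. of_real ((norm (f x - S x))^2)) has_integral (A0 - N * of_real T)) Bx"
        unfolding Geq by simp
      have "((Re \<circ> (\<lambda>x. of_real ((norm (f x - S x))^2))) has_integral Re (A0 - N * of_real T)) Bx"
        by (rule has_integral_linear[OF G' bounded_linear_Re])
      then show ?thesis by (simp add: o_def)
    qed
    have "0 \<le> Re (A0 - N * of_real T)" by (rule has_integral_nonneg[OF R]) simp
    then have "(2*pi)^CARD('d) * T \<le> Re A0" by (simp add: N_def)
    then show ?thesis unfolding T_def[symmetric] by (simp add: field_simps)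
  qed
  show ?thesis
    by (rule nonneg_bdd_above_summable_on) (auto simp: bdd_above_def intro!: exI[of _ "Re A0 / (2*pi)^CARD('d)"] bnd)
qed



lemma norm_c: "norm (cnj (pinv_seq Lhat k) * shifted_comb x0 k) = (if Lhat k = 0 then 0 else 1 / norm (Lhat k))"
proof -
  have "norm (shifted_comb x0 k) = 1"
    unfolding shifted_comb_def using norm_exp_i_times[of "- (x0 \<bullet> kvec k)"] by simp
  then show ?thesis by (simp add: pinv_seq_def norm_mult norm_divide)
qed

lemma part1:
  assumes "(\<lambda>k. 1 / norm (Lhat k)) summable_on {k. Lhat k \<noteq> 0}"
  shows "sampling_admissible (Lhat :: int^'d \<Rightarrow> complex)"
  unfolding sampling_admissible_def
proof
  fix x0 :: "real^'d"
  have "(\<lambda>k. norm (cnj (pinv_seq Lhat k) * shifted_comb x0 k)) summable_on UNIV"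
    using assms by (subst summable_on_cong_neutral[where g="\<lambda>k. 1 / norm (Lhat k)" and T="{k. Lhat k \<noteq> 0}"])
      (auto simp: norm_c)
  then show "continuous_gen (\<lambda>k. cnj (pinv_seq Lhat k) * shifted_comb x0 k)"
    by (rule fourier_construct)
qed

lemma part2:
  assumes "sampling_admissible (Lhat :: int^'d \<Rightarrow> complex)"
  shows "(\<lambda>k. 1 / norm (Lhat k) ^ 2) summable_on {k. Lhat k \<noteq> 0}"
proof -
  have "continuous_gen (\<lambda>k. cnj (pinv_seq Lhat k) * shifted_comb 0 k)"
    using assms unfolding sampling_admissible_def by blast
  then have "(\<lambda>k. (norm (cnj (pinv_seq Lhat k) * shifted_comb 0 k))^2) summable_on UNIV"
    by (rule bessel)
  then have "(\<lambda>k. (norm (cnj (pinv_seq Lhat k) * shifted_comb 0 k))^2) summable_on {k. Lhat k \<noteq> 0}"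
    by (rule summable_on_subset_banach) auto
  then show ?thesis
    by (rule summable_on_cong[THEN iffD1, rotated]) (auto simp: norm_c power_one_over)
qed

lemma part3:
  fixes Lhat :: "int^'d \<Rightarrow> complex"
  assumes sg: "spectral_growth Lhat \<gamma>" and g: "\<gamma> > real CARD('d)"
  shows "(\<lambda>k. 1 / norm (Lhat k)) summable_on {k. Lhat k \<noteq> 0}"
proof -
  obtain A B k0 where A: "0 < A" and k0: "k0 \<ge> 0"
    and bd: "\<And>k. norm (kvec k) \<ge> k0 \<Longrightarrow> A * norm (kvec k) powr \<gamma> \<le> norm (Lhat k)"
    using sg unfolding spectral_growth_def by blast
  define R where "R = max k0 1"
  have big: "(\<lambda>k. 1 / norm (Lhat k)) summable_on {k. Lhat k \<noteq> 0} \<inter> {k. R \<le> norm (kvec k)}"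
  proof (rule summable_on_comparison_test)
    show "(\<lambda>k. (1/A) * norm (kvec k) powr -\<gamma>) summable_on {k. Lhat k \<noteq> 0} \<inter> {k. R \<le> norm (kvec k)}"
      by (rule summable_on_subset_banach[OF summable_on_cmult_right[OF lattice_conv[OF g]]]) auto
  next
    fix k assume k: "k \<in> {k. Lhat k \<noteq> 0} \<inter> {k. R \<le> norm (kvec k)}"
    then have x1: "1 \<le> norm (kvec k)" and xk: "k0 \<le> norm (kvec k)" by (auto simp: R_def)
    have "norm (kvec k) \<noteq> 0" using x1 by linarith
    then have p: "0 < norm (kvec k) powr \<gamma>" using powr_gt_zero by blast
    have l: "A * norm (kvec k) powr \<gamma> \<le> norm (Lhat k)" by (rule bd[OF xk])
    have "1 / norm (Lhat k) \<le> 1 / (A * norm (kvec k) powr \<gamma>)"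
    proof -
      have q: "0 < A * norm (kvec k) powr \<gamma>" using A p by simp
      have l0: "0 < norm (Lhat k)" using q l by linarith
      show ?thesis using q l l0 by (intro divide_left_mono) (auto intro!: mult_pos_pos)
    qed
    also have "\<dots> = (1/A) * norm (kvec k) powr -\<gamma>" by (simp add: powr_minus field_simps)
    finally show "1 / norm (Lhat k) \<le> (1/A) * norm (kvec k) powr -\<gamma>" .
  qed simp
  have small: "(\<lambda>k. 1 / norm (Lhat k)) summable_on {k. Lhat k \<noteq> 0} \<inter> {k. norm (kvec k) < R}"
    by (rule summable_on_finite) (rule finite_subset[OF _ finite_norm_less[of R]], auto)
  have "{k. Lhat k \<noteq> 0} = ({k. Lhat k \<noteq> 0} \<inter> {k. R \<le> norm (kvec k)}) \<union> ({k. Lhat k \<noteq> 0} \<inter> {k. norm (kvec k) < R})"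
    by auto
  then show ?thesis using summable_on_union[OF big small] by simp
qed

lemma part4:
  fixes Lhat :: "int^'d \<Rightarrow> complex"
  assumes sg: "spectral_growth Lhat \<gamma>" and g: "\<gamma> \<le> real CARD('d) / 2"
  shows "\<not> sampling_admissible Lhat"
proof
  assume "sampling_admissible Lhat"
  then have S: "(\<lambda>k. 1 / norm (Lhat k) ^ 2) summable_on {k. Lhat k \<noteq> 0}" by (rule part2)
  obtain A B k0 where A: "0 < A" and AB: "A \<le> B" and k0: "k0 \<ge> 0"
    and bd: "\<And>k. norm (kvec k) \<ge> k0 \<Longrightarrow> A * norm (kvec k) powr \<gamma> \<le> norm (Lhat k) \<and> norm (Lhat k) \<le> B * norm (kvec k) powr \<gamma>"
    using sg unfolding spectral_growth_def by blast
  have g0: "\<gamma> \<ge> 0" using sg by (simp add: spectral_growth_def)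
  define R where "R = max k0 1"
  have sub: "{k. R \<le> norm (kvec k)} \<subseteq> {k. Lhat k \<noteq> 0}"
  proof
    fix k :: "int^'d" assume "k \<in> {k. R \<le> norm (kvec k)}"
    then have x1: "1 \<le> norm (kvec k)" and xk: "k0 \<le> norm (kvec k)" by (auto simp: R_def)
    have "norm (kvec k) \<noteq> 0" using x1 by linarith
    then have "0 < norm (kvec k) powr \<gamma>" using powr_gt_zero by blast
    then have "0 < A * norm (kvec k) powr \<gamma>" using A by simp
    then show "k \<in> {k. Lhat k \<noteq> 0}" using bd[OF xk] by auto
  qed
  have "(\<lambda>k::int^'d. norm (kvec k) powr -real CARD('d)) summable_on {k. R \<le> norm (kvec k)}"
  proof (rule summable_on_comparison_test)
    show "(\<lambda>k. B^2 * (1 / norm (Lhat k) ^ 2)) summable_on {k. R \<le> norm (kvec k)}"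
      by (rule summable_on_cmult_right[OF summable_on_subset_banach[OF S sub]])
  next
    fix k :: "int^'d" assume "k \<in> {k. R \<le> norm (kvec k)}"
    then have x1: "1 \<le> norm (kvec k)" and xk: "k0 \<le> norm (kvec k)" by (auto simp: R_def)
    define x where "x = norm (kvec k)"
    define l where "l = norm (Lhat k)"
    have x0: "0 < x" using x1 unfolding x_def by linarith
    have p: "0 < x powr \<gamma>" using x0 by simp
    have lA: "A * x powr \<gamma> \<le> l" and lB: "l \<le> B * x powr \<gamma>" using bd[OF xk] by (auto simp: x_def l_def)
    have l0: "0 < l" using mult_pos_pos[OF A p] lA by linarith
    have "l^2 \<le> (B * x powr \<gamma>)^2" using l0 lB by (intro power_mono) auto
    also have "\<dots> = B^2 * x powr (2*\<gamma>)"
    proof -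
      have "x powr (2*\<gamma>) = x powr (\<gamma> + \<gamma>)" by (simp only: mult_2)
      also have "\<dots> = x powr \<gamma> * x powr \<gamma>" by (rule powr_add)
      finally show ?thesis by (simp add: power2_eq_square)
    qed
    also have "\<dots> \<le> B^2 * x powr (real CARD('d))"
      using g x1 by (intro mult_left_mono powr_mono) (auto simp: x_def)
    finally have le: "l^2 \<le> B^2 * x powr (real CARD('d))" .
    have xd: "0 < x powr (real CARD('d))" using x0 by simp
    have "x powr -real CARD('d) = 1 / x powr (real CARD('d))" by (simp add: powr_minus divide_inverse)
    also have "\<dots> \<le> B^2 / l^2" using le l0 xd by (simp add: field_simps)
    finally show "norm (kvec k) powr -real CARD('d) \<le> B^2 * (1 / norm (Lhat k) ^ 2)"
      by (simp add: x_def l_def)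
  qed simp
  then show False using lattice_div by blast
qed

theorem mainTheorem9:
  fixes Lhat :: "int ^ 'd \<Rightarrow> complex"
  assumes "spline_admissible Lhat"
  shows "((\<lambda>k. 1 / norm (Lhat k)) summable_on {k. Lhat k \<noteq> 0} \<longrightarrow> sampling_admissible Lhat)
       \<and> (\<not> (\<lambda>k. 1 / norm (Lhat k) ^ 2) summable_on {k. Lhat k \<noteq> 0} \<longrightarrow> \<not> sampling_admissible Lhat)
       \<and> (\<forall>\<gamma>. spectral_growth Lhat \<gamma> \<and> \<gamma> > real CARD('d) \<longrightarrow> sampling_admissible Lhat)
       \<and> (\<forall>\<gamma>. spectral_growth Lhat \<gamma> \<and> \<gamma> \<le> real CARD('d) / 2 \<longrightarrow> \<not> sampling_admissible Lhat)"
  using part1 part2 part3 part4 by blast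

end
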